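(* Let $1\le p,q\le\infty$, $A=(a_{ij})$ a real $m\times n$ matrix and $G=(g_{ij})$ an $m\times n$ matrix with i.i.d. standard Gaussian entries. Then $$\mathbb{E}\|G_A\colon\ell_p^n\to\ell_q^m\|\ge c(p,q)\cdot\begin{cases}\max_{j\le n}\sqrt{\ln(j+1)}\,b_j^{\downarrow}&\text{if }p\le q\le2,\\ \max_{i\le m}\sqrt{\ln(i+1)}\,d_i^{\downarrow}&\text{if }2\le p\le q,\\ 0&\text{otherwise,}\end{cases}$$ where $b_j=\|(a_{ij})_{i\le m}\|_{2q/(2-q)}$, $d_i=\|(a_{ij})_{j\le n}\|_{2p/(p-2)}$, and $c(p,q)>0$ depends only on $p,q$.
   Context: $G_A=(a_{ij}g_{ij})$. $\|B\colon\ell_p^n\to\ell_q^m\|=\sup_{\|x\|_p\le1}\|Bx\|_q$ with $\|\cdot\|_s$ the usual $\ell_s$ norm. For a sequence $(x_j)$, $(x_j^{\downarrow})$ is the non-increasing rearrangement of $(|x_j|)$. The exponents $2q/(2-q)$ for $q=2$ and $2p/(p-2)$ for $p=2$ are interpreted as $\infty$. *)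

theory Defs
  imports "HOL-Probability.Probability"
begin

definition lp_norm :: "ereal \<Rightarrow> (nat \<Rightarrow> real) \<Rightarrow> nat \<Rightarrow> real" where
  "lp_norm s x k =
     (if s = \<infinity> then (if k = 0 then 0 else Max ((\<lambda>i. \<bar>x i\<bar>) ` {..<k}))
      else (\<Sum>i<k. \<bar>x i\<bar> powr real_of_ereal s) powr (1 / real_of_ereal s))"

definition op_norm :: "ereal \<Rightarrow> ereal \<Rightarrow> nat \<Rightarrow> nat \<Rightarrow> (nat \<times> nat \<Rightarrow> real) \<Rightarrow> real" where
  "op_norm p q m n B =
     Sup {lp_norm q (\<lambda>i. \<Sum>j<n. B (i, j) * x j) m | x. lp_norm p x n \<le> 1}"

text \<open>Non-increasing rearrangement of (|x 0|, ..., |x (k-1)|), indexed from 1 to k.\<close>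
definition dec_rearr :: "(nat \<Rightarrow> real) \<Rightarrow> nat \<Rightarrow> nat \<Rightarrow> real" where
  "dec_rearr x k j = rev (sort (map (\<lambda>i. \<bar>x i\<bar>) [0..<k])) ! (j - 1)"

definition exp_q :: "ereal \<Rightarrow> ereal" where
  "exp_q q = (if q = 2 then \<infinity> else 2 * q / (2 - q))"

definition exp_p :: "ereal \<Rightarrow> ereal" where
  "exp_p p = (if p = 2 then \<infinity> else if p = \<infinity> then 2 else 2 * p / (p - 2))"

definition gauss_matrix :: "nat \<Rightarrow> nat \<Rightarrow> (nat \<times> nat \<Rightarrow> real) measure" where
  "gauss_matrix m n = PiM ({..<m} \<times> {..<n}) (\<lambda>_. density lborel std_normal_density)"

end

theory Submission
  imports Defs
begin


abbreviation "GM I \<equiv> PiM I (\<lambda>_. density lborel std_normal_density)"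

lemma gm_prob: "prob_space (GM I)"
  by (intro prob_space_PiM prob_space_normal_density) auto

lemma gm_coord_distr:
  assumes "c \<in> I"
  shows "distr (GM I) lborel (\<lambda>\<omega>. \<omega> c) = density lborel std_normal_density"
proof -
  have "distr (GM I) lborel (\<lambda>\<omega>. \<omega> c) = distr (GM I) (density lborel std_normal_density) (\<lambda>\<omega>. \<omega> c)"
    by (rule distr_cong) auto
  also have "\<dots> = density lborel std_normal_density"
    by (rule distr_PiM_component[OF _ assms]) (auto intro: prob_space_normal_density)
  finally show ?thesis .
qed

lemma gm_coord_indep:
  assumes "I \<noteq> {}"
  shows "prob_space.indep_vars (GM I) (\<lambda>_. borel) (\<lambda>c \<omega>. \<omega> c) I"
proof -
  interpret prob_space "GM I" by (rule gm_prob)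
  have rv: "random_variable borel (\<lambda>\<omega>. \<omega> c)" if "c \<in> I" for c
    using that by measurable
  have "distr (GM I) (PiM I (\<lambda>_. borel)) (\<lambda>x. \<lambda>c\<in>I. x c) = distr (GM I) (GM I) (\<lambda>x. x)"
    by (rule distr_cong) (auto simp: space_PiM intro!: sets_PiM_cong)
  also have "\<dots> = PiM I (\<lambda>c. distr (GM I) borel (\<lambda>\<omega>. \<omega> c))"
    apply simp
    apply (rule PiM_cong)
     apply simp
    apply (subst distr_cong[where N=borel and L=lborel])
       apply auto[3]
    apply (simp add: gm_coord_distr)
    done
  finally show ?thesis
    by (subst indep_vars_iff_distr_eq_PiM'[OF assms rv]) auto
qed

lemma gm_coord_normal:
  assumes "c \<in> I"
  shows "distributed (GM I) lborel (\<lambda>\<omega>. \<omega> c) (normal_density 0 1)"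
  unfolding distributed_def using assms by (auto simp: gm_coord_distr)

lemma gm_sum_normal:
  assumes fin: "finite K" "K \<subseteq> I" and pos: "0 < (\<Sum>c\<in>K. (w c)\<^sup>2)"
  shows "distributed (GM I) lborel (\<lambda>\<omega>. \<Sum>c\<in>K. w c * \<omega> c)
           (normal_density 0 (sqrt (\<Sum>c\<in>K. (w c)\<^sup>2)))"
proof -
  interpret prob_space "GM I" by (rule gm_prob)
  define S where "S = {c\<in>K. w c \<noteq> 0}"
  have S: "finite S" "S \<subseteq> I" using fin by (auto simp: S_def)
  have "S \<noteq> {}"
  proof
    assume "S = {}"
    then have "\<forall>c\<in>K. w c = 0" by (auto simp: S_def)
    then show False using pos by simp
  qed
  then have "I \<noteq> {}" using S by auto
  have ind: "indep_vars (\<lambda>_. borel) (\<lambda>c \<omega>. w c * \<omega> c) S"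
    using indep_vars_compose2[OF indep_vars_subset[OF gm_coord_indep[OF \<open>I \<noteq> {}\<close>] \<open>S \<subseteq> I\<close>],
        where Y="\<lambda>c x. w c * x" and N="\<lambda>_. borel"]
    by simp
  have dist: "distributed (GM I) lborel (\<lambda>\<omega>. w c * \<omega> c) (normal_density 0 \<bar>w c\<bar>)" if "c \<in> S" for c
  proof -
    have "w c \<noteq> 0" "c \<in> I" using that S by (auto simp: S_def)
    from normal_density_affine[OF gm_coord_normal[OF \<open>c \<in> I\<close>], of "w c" 0] \<open>w c \<noteq> 0\<close>
    show ?thesis by simp
  qed
  have "distributed (GM I) lborel (\<lambda>x. \<Sum>c\<in>S. w c * x c)
         (normal_density (\<Sum>c\<in>S. 0) (sqrt (\<Sum>c\<in>S. \<bar>w c\<bar>\<^sup>2)))"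
    by (rule sum_indep_normal[OF S(1) \<open>S \<noteq> {}\<close> ind _ dist]) (auto simp: S_def)
  moreover have "(\<lambda>x. \<Sum>c\<in>S. w c * x c) = (\<lambda>x. \<Sum>c\<in>K. w c * x c)"
    by (intro ext sum.mono_neutral_left) (auto simp: S_def fin)
  moreover have "(\<Sum>c\<in>S. \<bar>w c\<bar>\<^sup>2) = (\<Sum>c\<in>K. (w c)\<^sup>2)"
    by (simp, intro sum.mono_neutral_left) (auto simp: S_def fin)
  ultimately show ?thesis by simp
qed


lemma gm_blocks_indep:
  assumes "I \<noteq> {}" "\<And>l. l \<in> L \<Longrightarrow> K l \<subseteq> I" "disjoint_family_on K L"
  shows "prob_space.indep_vars (GM I) (\<lambda>_. borel) (\<lambda>l \<omega>. \<Sum>c\<in>K l. w c * \<omega> c) L"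
proof -
  interpret prob_space "GM I" by (rule gm_prob)
  have r: "indep_vars (\<lambda>l. PiM (K l) (\<lambda>_. borel)) (\<lambda>l \<omega>. restrict (\<lambda>c. \<omega> c) (K l)) L"
    by (rule indep_vars_restrict[OF gm_coord_indep[OF assms(1)] assms(2,3)])
  have "indep_vars (\<lambda>_. borel) (\<lambda>l \<omega>. (\<lambda>h. \<Sum>c\<in>K l. w c * h c) (restrict (\<lambda>c. \<omega> c) (K l))) L"
    by (rule indep_vars_compose2[OF r]) measurable
  then show ?thesis
    by (rule indep_vars_cong[THEN iffD1, rotated 3]) auto
qed

lemma normal_tail:
  assumes M: "prob_space M" and X: "distributed M lborel X (normal_density 0 \<sigma>)"
    and "0 < \<sigma>" "0 \<le> s"
  shows "exp (-1) / sqrt (2*pi) * exp (-(s\<^sup>2)) \<le> measure M {\<omega>\<in>space M. s*\<sigma> < X \<omega>}"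
proof -
  interpret prob_space M by (rule M)
  have Xm: "X \<in> measurable M lborel" using X by (simp add: distributed_def)
  have set: "{\<omega>\<in>space M. s*\<sigma> < X \<omega>} = X -` {s*\<sigma><..} \<inter> space M" by auto
  let ?f = "normal_density 0 \<sigma>"
  let ?a = "s*\<sigma>+\<sigma>"
  have "emeasure M {\<omega>\<in>space M. s*\<sigma> < X \<omega>} = emeasure (distr M lborel X) {s*\<sigma><..}"
    unfolding set by (rule emeasure_distr[symmetric, OF Xm]) simp
  also have "\<dots> = emeasure (density lborel ?f) {s*\<sigma><..}"
    using X by (simp add: distributed_def)
  also have "\<dots> = (\<integral>\<^sup>+x. ennreal (?f x) * indicator {s*\<sigma><..} x \<partial>lborel)"
    by (subst emeasure_density) auto
  also have "\<dots> \<ge> (\<integral>\<^sup>+x. ennreal (?f ?a) * indicator {s*\<sigma><..?a} x \<partial>lborel)"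
  proof (intro nn_integral_mono)
    fix x
    show "ennreal (?f ?a) * indicator {s*\<sigma><..?a} x \<le> ennreal (?f x) * indicator {s*\<sigma><..} x"
    proof (cases "x \<in> {s*\<sigma><..?a}")
      case True
      then have x: "s*\<sigma> < x" "x \<le> ?a" by auto
      have "0 \<le> s*\<sigma>" using assms by simp
      then have "x\<^sup>2 \<le> ?a\<^sup>2" using x by (intro power_mono) auto
      then have "?f ?a \<le> ?f x"
        unfolding normal_density_def using \<open>0 < \<sigma>\<close>
        by (intro mult_left_mono) (auto simp: divide_right_mono)
      then show ?thesis using True x by (auto intro: ennreal_leI)
    qed auto
  qed
  also have "(\<integral>\<^sup>+x. ennreal (?f ?a) * indicator {s*\<sigma><..?a} x \<partial>lborel) = ennreal (?f ?a * \<sigma>)"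
    using \<open>0 < \<sigma>\<close> by (subst nn_integral_cmult_indicator) (auto simp: ennreal_mult)
  finally have E: "ennreal (?f ?a * \<sigma>) \<le> emeasure M {\<omega>\<in>space M. s*\<sigma> < X \<omega>}" .
  have eq: "?f ?a * \<sigma> = exp (-((s+1)\<^sup>2)/2) / sqrt (2*pi)"
    using \<open>0 < \<sigma>\<close> unfolding normal_density_def
    by (simp add: real_sqrt_mult power2_eq_square field_simps)
  have "exp (-1) * exp (-(s\<^sup>2)) \<le> exp (-((s+1)\<^sup>2)/2)"
  proof -
    have "-1 + -(s\<^sup>2) \<le> -((s+1)\<^sup>2)/2"
      using zero_le_power2[of "s - 1"] by (simp add: power2_eq_square field_simps)
    then show ?thesis by (simp flip: exp_add)
  qed
  then have le: "exp (-1) / sqrt (2*pi) * exp (-(s\<^sup>2)) \<le> ?f ?a * \<sigma>"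
    unfolding eq by (simp add: divide_right_mono field_simps)
  have "ennreal (exp (-1) / sqrt (2*pi) * exp (-(s\<^sup>2))) \<le> emeasure M {\<omega>\<in>space M. s*\<sigma> < X \<omega>}"
    using le E by (meson ennreal_leI order_trans)
  then show ?thesis
    by (simp add: emeasure_eq_measure)
qed


definition "cst = 1 - exp (-(exp (-1) / sqrt (2*pi)) / 2)"

lemma cst_pos: "0 < cst"
  unfolding cst_def by simp

lemma max_gauss_bound:
  fixes L :: "'l set" and K :: "'l \<Rightarrow> 'c set" and w :: "'c \<Rightarrow> real"
  assumes L: "finite L" "card L = k" "1 \<le> k"
    and K: "\<And>l. l \<in> L \<Longrightarrow> K l \<subseteq> I" "\<And>l. l \<in> L \<Longrightarrow> finite (K l)" "disjoint_family_on K L"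
    and \<beta>: "0 < \<beta>" "\<And>l. l \<in> L \<Longrightarrow> \<beta> \<le> sqrt (\<Sum>c\<in>K l. (w c)\<^sup>2)"
    and F: "\<And>\<omega> l. l \<in> L \<Longrightarrow> \<bar>\<Sum>c\<in>K l. w c * \<omega> c\<bar> \<le> F \<omega>"
  shows "ennreal (cst * sqrt (ln (real k + 1)) * \<beta>) \<le> (\<integral>\<^sup>+\<omega>. ennreal (F \<omega>) \<partial>GM I)"
proof -
  interpret prob_space "GM I" by (rule gm_prob)
  define X where "X = (\<lambda>l \<omega>. \<Sum>c\<in>K l. w c * \<omega> c)"
  define \<sigma> where "\<sigma> = (\<lambda>l. sqrt (\<Sum>c\<in>K l. (w c)\<^sup>2))"
  have Spos: "0 < (\<Sum>c\<in>K l. (w c)\<^sup>2)" if "l \<in> L" for l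
  proof -
    have "0 < sqrt (\<Sum>c\<in>K l. (w c)\<^sup>2)" using \<beta> that by (meson less_le_trans)
    then show ?thesis by simp
  qed
  have \<sigma>pos: "0 < \<sigma> l" if "l \<in> L" for l using Spos[OF that] by (simp add: \<sigma>_def)
  have "L \<noteq> {}" using L by auto
  then obtain l0 where "l0 \<in> L" by auto
  have "K l0 \<noteq> {}" using Spos[OF \<open>l0 \<in> L\<close>] by auto
  then have "I \<noteq> {}" using K(1)[OF \<open>l0 \<in> L\<close>] by auto
  have dist: "distributed (GM I) lborel (X l) (normal_density 0 (\<sigma> l))" if "l \<in> L" for l
    unfolding X_def \<sigma>_def by (rule gm_sum_normal[OF K(2)[OF that] K(1)[OF that] Spos[OF that]])
  have ind: "indep_vars (\<lambda>_. borel) X L"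
    unfolding X_def by (rule gm_blocks_indep[OF \<open>I \<noteq> {}\<close> K(1) K(3)])
  have Xm: "X l \<in> borel_measurable (GM I)" if "l \<in> L" for l
    unfolding X_def using K(1)[OF that] by (intro borel_measurable_sum) auto
  define s where "s = sqrt (ln (real k + 1))"
  have s0: "0 \<le> s" using L by (simp add: s_def)
  have es: "exp (-(s\<^sup>2)) = 1 / (real k + 1)"
    using L by (simp add: s_def exp_minus inverse_eq_divide)
  define c0 where "c0 = exp (-1) / sqrt (2*pi)"
  have c0: "0 < c0" "c0 < 1"
  proof -
    show "0 < c0" by (simp add: c0_def)
    have "exp (-1::real) < 1" by simp
    moreover have "1 < sqrt (2*pi)" using pi_gt3 by simp
    ultimately have "exp (-1) < sqrt (2*pi)" by linarith
    then show "c0 < 1" unfolding c0_def by (simp add: divide_less_eq)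
  qed
  define E where "E = (\<lambda>l. X l -` {..s * \<sigma> l} \<inter> space (GM I))"
  have "prob (\<Inter>l\<in>L. E l) = (\<Prod>l\<in>L. prob (E l))"
    unfolding E_def by (rule indep_varsD_finite[OF ind \<open>L \<noteq> {}\<close> L(1)]) simp
  also have "\<dots> \<le> (\<Prod>l\<in>L. 1 - c0 / (real k + 1))"
  proof (rule prod_mono)
    fix l assume l: "l \<in> L"
    have "E l = space (GM I) - {\<omega>\<in>space (GM I). s * \<sigma> l < X l \<omega>}"
      by (auto simp: E_def)
    then have "prob (E l) = 1 - prob {\<omega>\<in>space (GM I). s * \<sigma> l < X l \<omega>}"
      using Xm[OF l] by (simp add: prob_compl)
    moreover have "c0 * exp (-(s\<^sup>2)) \<le> prob {\<omega>\<in>space (GM I). s * \<sigma> l < X l \<omega>}"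
      unfolding c0_def by (rule normal_tail[OF gm_prob dist[OF l] \<sigma>pos[OF l] s0])
    ultimately show "0 \<le> prob (E l) \<and> prob (E l) \<le> 1 - c0 / (real k + 1)"
      by (simp add: es)
  qed
  also have "\<dots> = (1 - c0 / (real k + 1)) ^ k" using L by simp
  also have "\<dots> \<le> exp (- (c0 / (real k + 1))) ^ k"
  proof (rule power_mono)
    show "1 - c0 / (real k + 1) \<le> exp (- (c0 / (real k + 1)))"
      using exp_ge_add_one_self[of "- (c0 / (real k + 1))"] by simp
    have "c0 / (real k + 1) \<le> c0" using c0 by (simp add: divide_le_eq)
    then show "0 \<le> 1 - c0 / (real k + 1)" using c0 by simp
  qed
  also have "\<dots> = exp (- (real k * (c0 / (real k + 1))))"
    by (simp add: exp_of_nat_mult[symmetric])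
  also have "\<dots> \<le> exp (- c0 / 2)"
  proof -
    have "c0 / 2 \<le> real k * (c0 / (real k + 1))"
      using L c0 by (simp add: field_simps)
    then show ?thesis by simp
  qed
  finally have Pint: "prob (\<Inter>l\<in>L. E l) \<le> exp (- c0 / 2)" .
  define F' where "F' = space (GM I) - (\<Inter>l\<in>L. E l)"
  have F'm: "F' \<in> sets (GM I)" unfolding F'_def E_def
    using L(1) Xm by (intro sets.Diff sets.top sets.finite_INT) (auto simp: \<open>L \<noteq> {}\<close>)
  have "prob F' = 1 - prob (\<Inter>l\<in>L. E l)"
    unfolding F'_def
    by (rule prob_compl) (use L(1) Xm in \<open>auto simp: E_def \<open>L \<noteq> {}\<close> intro!: sets.finite_INT\<close>)
  with Pint have PF: "cst \<le> prob F'" by (simp add: cst_def c0_def)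
  have A: "(\<integral>\<^sup>+\<omega>. ennreal (s * \<beta>) * indicator F' \<omega> \<partial>GM I) \<le> (\<integral>\<^sup>+\<omega>. ennreal (F \<omega>) \<partial>GM I)"
  proof (rule nn_integral_mono)
    fix \<omega> assume "\<omega> \<in> space (GM I)"
    show "ennreal (s * \<beta>) * indicator F' \<omega> \<le> ennreal (F \<omega>)"
    proof (cases "\<omega> \<in> F'")
      case True
      then obtain l where l: "l \<in> L" "\<omega> \<notin> E l" by (auto simp: F'_def)
      then have "s * \<sigma> l < X l \<omega>" using True by (auto simp: E_def F'_def)
      moreover have "s * \<beta> \<le> s * \<sigma> l" using \<beta>(2)[OF l(1)] s0 by (simp add: \<sigma>_def mult_left_mono)
      moreover have "X l \<omega> \<le> F \<omega>" using F[OF l(1), of \<omega>] by (simp add: X_def)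
      ultimately show ?thesis using True by (auto intro: ennreal_leI)
    qed simp
  qed
  have B: "(\<integral>\<^sup>+\<omega>. ennreal (s * \<beta>) * indicator F' \<omega> \<partial>GM I) = ennreal (s * \<beta>) * emeasure (GM I) F'"
    by (rule nn_integral_cmult_indicator[OF F'm])
  have C: "ennreal (cst * s * \<beta>) \<le> ennreal (s * \<beta>) * emeasure (GM I) F'"
  proof -
    have "cst * s * \<beta> \<le> s * \<beta> * prob F'"
    proof -
      have "s * \<beta> * cst \<le> s * \<beta> * prob F'"
        using PF s0 \<beta>(1) by (intro mult_left_mono) auto
      then show ?thesis by (simp add: algebra_simps)
    qed
    then show ?thesis
      using s0 \<beta>(1) by (simp add: emeasure_eq_measure ennreal_mult[symmetric] ennreal_leI)
  qed
  have "ennreal (cst * s * \<beta>) \<le> (\<integral>\<^sup>+\<omega>. ennreal (F \<omega>) \<partial>GM I)"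
    using C A unfolding B by (rule order_trans)
  then show ?thesis unfolding s_def .
qed



lemma lp_norm_fin: "lp_norm (ereal s) x k = (\<Sum>i<k. \<bar>x i\<bar> powr s) powr (1 / s)"
  by (simp add: lp_norm_def)

lemma lp_norm_inf: "lp_norm \<infinity> x k = (if k = 0 then 0 else Max ((\<lambda>i. \<bar>x i\<bar>) ` {..<k}))"
  by (simp add: lp_norm_def)

lemma lp_comp:
  assumes "1 \<le> s" "i < k"
  shows "\<bar>x i\<bar> \<le> lp_norm s x k"
proof (cases s)
  case (real r)
  with assms have r: "1 \<le> r" by simp
  have "\<bar>x i\<bar> = (\<bar>x i\<bar> powr r) powr (1 / r)" using r by (simp add: powr_powr)
  also have "\<dots> \<le> (\<Sum>i<k. \<bar>x i\<bar> powr r) powr (1 / r)"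
    using r assms(2) by (intro powr_mono2 member_le_sum) auto
  finally show ?thesis by (simp add: real lp_norm_fin)
next
  case PInf
  then show ?thesis using assms(2) by (auto simp: lp_norm_inf)
next
  case MInf
  then show ?thesis using assms by simp
qed

lemma lp_upper:
  assumes "1 \<le> s" "0 \<le> M" "\<And>i. i < k \<Longrightarrow> \<bar>x i\<bar> \<le> M"
  shows "lp_norm s x k \<le> real k * M"
proof (cases s)
  case (real r)
  with assms have r: "1 \<le> r" by simp
  have "(\<Sum>i<k. \<bar>x i\<bar> powr r) \<le> (\<Sum>i<k. M powr r)"
    using assms r by (intro sum_mono powr_mono2) auto
  then have "(\<Sum>i<k. \<bar>x i\<bar> powr r) powr (1/r) \<le> (real k * M powr r) powr (1/r)"
    using r by (intro powr_mono2) (auto intro: sum_nonneg)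
  also have "\<dots> = real k powr (1/r) * M"
    using r assms(2) by (simp add: powr_mult powr_powr)
  also have "\<dots> \<le> real k * M"
  proof (cases "k = 0")
    case False
    then have "real k powr (1/r) \<le> real k powr 1"
      using r by (intro powr_mono) auto
    then show ?thesis using assms(2) False by (intro mult_right_mono) auto
  qed simp
  finally show ?thesis by (simp add: real lp_norm_fin)
next
  case PInf
  show ?thesis
  proof (cases "k = 0")
    case False
    have "Max ((\<lambda>i. \<bar>x i\<bar>) ` {..<k}) \<le> M"
      using False assms by (subst Max_le_iff) auto
    also have "M \<le> real k * M"
      using mult_right_mono[of 1 "real k" M] False assms(2) by simp
    finally show ?thesis using PInf False by (simp add: lp_norm_inf)
  qed (simp add: PInf lp_norm_inf)
next
  case MInf
  then show ?thesis using assms by simp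
qed

lemma op_norm_ge:
  assumes "1 \<le> p" "1 \<le> q" "lp_norm p x n \<le> 1"
  shows "lp_norm q (\<lambda>i. \<Sum>j<n. B (i, j) * x j) m \<le> op_norm p q m n B"
  unfolding op_norm_def
proof (rule cSup_upper)
  show "lp_norm q (\<lambda>i. \<Sum>j<n. B (i, j) * x j) m \<in>
      {lp_norm q (\<lambda>i. \<Sum>j<n. B (i, j) * x j) m | x. lp_norm p x n \<le> 1}"
    using assms by auto
  define C where "C = (\<Sum>i<m. \<Sum>j<n. \<bar>B (i, j)\<bar>)"
  have C0: "0 \<le> C" unfolding C_def by (intro sum_nonneg) auto
  show "bdd_above {lp_norm q (\<lambda>i. \<Sum>j<n. B (i, j) * x j) m | x. lp_norm p x n \<le> 1}"
  proof (rule bdd_aboveI)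
    fix z assume "z \<in> {lp_norm q (\<lambda>i. \<Sum>j<n. B (i, j) * x j) m | x. lp_norm p x n \<le> 1}"
    then obtain y where y: "lp_norm p y n \<le> 1" "z = lp_norm q (\<lambda>i. \<Sum>j<n. B (i, j) * y j) m"
      by auto
    have yb: "\<bar>y j\<bar> \<le> 1" if "j < n" for j
      using lp_comp[OF assms(1) that, of y] y(1) by simp
    have "\<bar>\<Sum>j<n. B (i, j) * y j\<bar> \<le> C" if "i < m" for i
    proof -
      have "\<bar>\<Sum>j<n. B (i, j) * y j\<bar> \<le> (\<Sum>j<n. \<bar>B (i, j) * y j\<bar>)" by (rule sum_abs)
      also have "\<dots> \<le> (\<Sum>j<n. \<bar>B (i, j)\<bar>)"
        using yb by (intro sum_mono) (auto simp: abs_mult intro: mult_left_le)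
      also have "\<dots> \<le> C" unfolding C_def
        using that by (intro member_le_sum[of i "{..<m}" "\<lambda>i. \<Sum>j<n. \<bar>B (i, j)\<bar>"]) (auto intro: sum_nonneg)
      finally show ?thesis .
    qed
    then show "z \<le> real m * C"
      unfolding y(2) by (intro lp_upper assms C0) auto
  qed
qed



lemma holder:
  assumes q: "1 < q" and t: "(\<Sum>i<k. \<bar>t i\<bar> powr (q/(q-1))) \<le> 1"
  shows "\<bar>\<Sum>i<k. y i * t i\<bar> \<le> lp_norm (ereal q) y k"
proof -
  define S where "S = (\<Sum>i<k. \<bar>y i\<bar> powr q)"
  define q' where "q' = q/(q-1)"
  have q': "1 < q'" "1/q + 1/q' = 1" using q by (auto simp: q'_def field_simps)
  have S0: "0 \<le> S" unfolding S_def by (intro sum_nonneg) auto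
  have "\<bar>\<Sum>i<k. y i * t i\<bar> \<le> (\<Sum>i<k. \<bar>y i\<bar> * \<bar>t i\<bar>)"
    using sum_abs[of "\<lambda>i. y i * t i" "{..<k}"] by (simp add: abs_mult)
  also have "\<dots> \<le> S powr (1/q)"
  proof (cases "S = 0")
    case True
    then have "\<forall>i\<in>{..<k}. \<bar>y i\<bar> powr q = 0" unfolding S_def
      by (subst sum_nonneg_eq_0_iff[symmetric]) auto
    then have "\<forall>i<k. y i = 0" by simp
    then show ?thesis by simp
  next
    case False
    define N where "N = S powr (1/q)"
    have N: "0 < N" using False S0 by (simp add: N_def)
    have Nq: "N powr q = S" using q S0 by (simp add: N_def powr_powr)
    have "(\<Sum>i<k. \<bar>y i\<bar> * \<bar>t i\<bar>) / N = (\<Sum>i<k. (\<bar>y i\<bar> / N) * \<bar>t i\<bar>)"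
      by (simp add: sum_divide_distrib)
    also have "\<dots> \<le> (\<Sum>i<k. (\<bar>y i\<bar> / N) powr q / q + \<bar>t i\<bar> powr q' / q')"
      using N q q' by (intro sum_mono Youngs_inequality) auto
    also have "\<dots> = (\<Sum>i<k. \<bar>y i\<bar> powr q) / S / q + (\<Sum>i<k. \<bar>t i\<bar> powr q') / q'"
      using N by (simp add: sum.distrib powr_divide Nq sum_divide_distrib)
    also have "\<dots> \<le> 1/q + 1/q'"
    proof -
      have "(\<Sum>i<k. \<bar>t i\<bar> powr q') / q' \<le> 1 / q'"
        using t q' by (intro divide_right_mono) (auto simp: q'_def)
      then show ?thesis using False by (simp add: S_def[symmetric])
    qed
    also have "\<dots> = 1" by (rule q'(2))
    finally show ?thesis using N by (simp add: N_def divide_le_eq)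
  qed
  finally show ?thesis by (simp add: lp_norm_fin S_def)
qed



lemma powr_sq: "(x powr e)\<^sup>2 = x powr (2*e)" for x :: real
  by (simp add: power2_eq_square powr_add[symmetric])

lemma weights:
  fixes s :: real and k :: nat and a :: "nat \<Rightarrow> real"
  assumes s: "2 < s"
  shows "\<exists>t. (\<Sum>i<k. \<bar>t i\<bar> powr s) \<le> 1 \<and>
    (\<Sum>i<k. (a i * t i)\<^sup>2) = ((\<Sum>i<k. \<bar>a i\<bar> powr (2 * s / (s - 2))) powr (1/(2 * s / (s - 2))))\<^sup>2"
proof -
  define r where "r = 2 * s / (s - 2)"
  have r: "0 < r" "2 + 2 * (r/s) = r" "2/r = 1 - 2/s" using s by (auto simp: r_def field_simps)
  define S where "S = (\<Sum>i<k. \<bar>a i\<bar> powr r)"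
  have S0: "0 \<le> S" unfolding S_def by (intro sum_nonneg) auto
  show ?thesis
  proof (cases "S = 0")
    case True
    then have "\<forall>i\<in>{..<k}. \<bar>a i\<bar> powr r = 0" unfolding S_def
      by (subst (asm) sum_nonneg_eq_0_iff) auto
    then have "\<forall>i<k. a i = 0" by simp
    then show ?thesis using True s by (intro exI[of _ "\<lambda>_. 0"]) (simp add: S_def r_def)
  next
    case False
    then have Sp: "0 < S" using S0 by simp
    define t where "t i = \<bar>a i\<bar> powr (r/s) / S powr (1/s)" for i
    have "(\<Sum>i<k. \<bar>t i\<bar> powr s) = (\<Sum>i<k. \<bar>a i\<bar> powr r / S)"
    proof (intro sum.cong refl)
      fix i
      have "\<bar>t i\<bar> powr s = (\<bar>a i\<bar> powr (r/s)) powr s / (S powr (1/s)) powr s"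
        unfolding t_def using Sp by (simp add: powr_divide)
      also have "\<dots> = \<bar>a i\<bar> powr r / S"
        using s Sp by (simp add: powr_powr)
      finally show "\<bar>t i\<bar> powr s = \<bar>a i\<bar> powr r / S" .
    qed
    also have "\<dots> = 1" using Sp by (simp add: S_def[symmetric] sum_divide_distrib[symmetric])
    finally have 1: "(\<Sum>i<k. \<bar>t i\<bar> powr s) \<le> 1" by simp
    have "(\<Sum>i<k. (a i * t i)\<^sup>2) = (\<Sum>i<k. \<bar>a i\<bar> powr r / S powr (2/s))"
    proof (intro sum.cong refl)
      fix i
      have e: "(a i)\<^sup>2 * \<bar>a i\<bar> powr (2 * (r/s)) = \<bar>a i\<bar> powr r"
      proof (cases "a i = 0")
        case False
        have "(a i)\<^sup>2 = \<bar>a i\<bar> powr 2" using False by (simp add: powr_numeral)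
        then have "(a i)\<^sup>2 * \<bar>a i\<bar> powr (2 * (r/s)) = \<bar>a i\<bar> powr (2 + 2 * (r/s))"
          by (simp add: powr_add)
        then show ?thesis using r(2) by simp
      qed (use r in simp)
      have "(a i * t i)\<^sup>2 = (a i)\<^sup>2 * ((\<bar>a i\<bar> powr (r/s))\<^sup>2 / (S powr (1/s))\<^sup>2)"
        unfolding t_def by (simp add: power_mult_distrib power_divide)
      also have "\<dots> = (a i)\<^sup>2 * \<bar>a i\<bar> powr (2 * (r/s)) / S powr (2/s)"
        by (simp add: powr_sq)
      also have "\<dots> = \<bar>a i\<bar> powr r / S powr (2/s)" using e by simp
      finally show "(a i * t i)\<^sup>2 = \<bar>a i\<bar> powr r / S powr (2/s)" .
    qed
    also have "\<dots> = S / S powr (2/s)" by (simp add: S_def sum_divide_distrib)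
    also have "\<dots> = S powr (1 - 2/s)" using Sp by (simp add: powr_diff)
    also have "\<dots> = (S powr (1/r))\<^sup>2" using r by (simp add: powr_sq)
    finally show ?thesis using 1 by (intro exI[of _ t]) (simp add: S_def r_def)
  qed
qed



lemma lp_sq2: "(lp_norm 2 a k)\<^sup>2 = (\<Sum>i<k. (a i)\<^sup>2)"
proof -
  have "lp_norm 2 a k = (\<Sum>i<k. \<bar>a i\<bar> powr 2) powr (1/2)"
    using lp_norm_fin[of 2 a k] by (simp add: numeral_eq_ereal)
  also have "(\<Sum>i<k. \<bar>a i\<bar> powr 2) = (\<Sum>i<k. (a i)\<^sup>2)"
    by (intro sum.cong refl) (simp add: powr_numeral)
  finally show ?thesis
    by (simp add: powr_sq sum_nonneg)
qed

lemma lp_inf_attained: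
  assumes "1 \<le> k"
  shows "\<exists>i0<k. lp_norm \<infinity> a k = \<bar>a i0\<bar>"
proof -
  have "Max ((\<lambda>i. \<bar>a i\<bar>) ` {..<k}) \<in> (\<lambda>i. \<bar>a i\<bar>) ` {..<k}"
    using assms by (intro Max_in) (auto simp: lessThan_empty_iff)
  then show ?thesis using assms by (auto simp: lp_norm_inf)
qed

lemma exp_q_fin: "q \<noteq> 2 \<Longrightarrow> exp_q (ereal q) = ereal (2 * q / (2 - q))"
  by (simp add: exp_q_def)

lemma exp_p_fin: "p \<noteq> 2 \<Longrightarrow> exp_p (ereal p) = ereal (2 * p / (p - 2))"
  by (simp add: exp_p_def)


lemma col_weights:
  fixes a :: "nat \<Rightarrow> real"
  assumes q: "1 \<le> q" "q \<le> 2" and m: "1 \<le> m"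
  shows "\<exists>t. (\<forall>y. \<bar>\<Sum>i<m. y i * t i\<bar> \<le> lp_norm q y m) \<and>
             (\<Sum>i<m. (a i * t i)\<^sup>2) = (lp_norm (exp_q q) a m)\<^sup>2"
proof (cases "q = 2")
  case True
  obtain i0 where i0: "i0 < m" "lp_norm \<infinity> a m = \<bar>a i0\<bar>" using lp_inf_attained[OF m] by blast
  define t where "t i = (if i = i0 then 1 else (0::real))" for i
  have s1: "(\<Sum>i<m. y i * t i) = y i0" for y
    using i0 by (simp add: t_def if_distrib sum.delta cong: if_cong)
  have "(\<Sum>i<m. (a i * t i)\<^sup>2) = (\<Sum>i<m. if i = i0 then (a i)\<^sup>2 else 0)"
    by (intro sum.cong) (auto simp: t_def)
  then have s2: "(\<Sum>i<m. (a i * t i)\<^sup>2) = (a i0)\<^sup>2"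
    using i0 by simp
  show ?thesis
    using True i0 lp_comp[of q _ m] q
    by (intro exI[of _ t]) (simp add: s1 s2 exp_q_def)
next
  case False
  obtain q0 where q0: "q = ereal q0" using q by (cases q) auto
  have q0r: "1 \<le> q0" "q0 < 2" using q False q0 by auto
  show ?thesis
  proof (cases "q0 = 1")
    case True
    have e: "exp_q q = 2" using True q0 by (simp add: exp_q_def)
    have "\<bar>\<Sum>i<m. y i * 1\<bar> \<le> lp_norm q y m" for y
    proof -
      have "lp_norm q y m = (\<Sum>i<m. \<bar>y i\<bar>)"
        using True q0 lp_norm_fin[of 1 y m] by (simp add: one_ereal_def)
      then show ?thesis by (simp add: sum_abs)
    qed
    then show ?thesis using lp_sq2[of a m] e
      by (intro exI[of _ "\<lambda>_. 1"]) simp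
  next
    case False
    then have q1: "1 < q0" using q0r by simp
    define s where "s = q0 / (q0 - 1)"
    have s2: "2 < s" using q1 q0r by (simp add: s_def field_simps)
    have sm: "s - 2 = (2 - q0) / (q0 - 1)"
      using q1 by (simp add: s_def field_simps)
    have r: "2 * s / (s - 2) = 2 * q0 / (2 - q0)"
      unfolding sm using q1 q0r by (simp add: s_def)
    obtain t where t: "(\<Sum>i<m. \<bar>t i\<bar> powr s) \<le> 1"
      "(\<Sum>i<m. (a i * t i)\<^sup>2) = ((\<Sum>i<m. \<bar>a i\<bar> powr (2 * s / (s - 2))) powr (1 / (2 * s / (s - 2))))\<^sup>2"
      using weights[OF s2, of m a] by blast
    have "\<bar>\<Sum>i<m. y i * t i\<bar> \<le> lp_norm q y m" for y
      unfolding q0 by (rule holder[OF q1]) (use t(1) in \<open>simp add: s_def\<close>)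
    moreover have "(\<Sum>i<m. (a i * t i)\<^sup>2) = (lp_norm (exp_q q) a m)\<^sup>2"
      using t(2) q0r q0 by (simp add: r exp_q_fin lp_norm_fin)
    ultimately show ?thesis by blast
  qed
qed

lemma row_weights:
  fixes a :: "nat \<Rightarrow> real"
  assumes p: "2 \<le> p" and n: "1 \<le> n"
  shows "\<exists>x. lp_norm p x n \<le> 1 \<and> (\<Sum>j<n. (a j * x j)\<^sup>2) = (lp_norm (exp_p p) a n)\<^sup>2"
proof (cases "p = 2")
  case True
  obtain i0 where i0: "i0 < n" "lp_norm \<infinity> a n = \<bar>a i0\<bar>" using lp_inf_attained[OF n] by blast
  define t where "t i = (if i = i0 then 1 else (0::real))" for i
  have "(\<Sum>i<n. (a i * t i)\<^sup>2) = (\<Sum>i<n. if i = i0 then (a i)\<^sup>2 else 0)"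
    by (intro sum.cong) (auto simp: t_def)
  then have s2: "(\<Sum>i<n. (a i * t i)\<^sup>2) = (a i0)\<^sup>2"
    using i0 by simp
  have "(\<Sum>i<n. (t i)\<^sup>2) = (\<Sum>i<n. if i = i0 then 1 else 0)"
    by (intro sum.cong) (auto simp: t_def)
  then have "(lp_norm 2 t n)\<^sup>2 = 1"
    unfolding lp_sq2 using i0 by simp
  then have "lp_norm 2 t n \<le> 1"
    by (metis abs_le_square_iff abs_one one_power2 order_refl abs_ge_self order_trans)
  then show ?thesis
    using True i0 by (intro exI[of _ t]) (simp add: s2 exp_p_def)
next
  case False
  show ?thesis
  proof (cases "p = \<infinity>")
    case True
    have e: "exp_p p = 2" using True by (simp add: exp_p_def)
    have "lp_norm p (\<lambda>_. 1) n = 1" using True n by (simp add: lp_norm_inf image_constant_conv lessThan_empty_iff)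
    then show ?thesis using lp_sq2[of a n] e
      by (intro exI[of _ "\<lambda>_. 1"]) simp
  next
    case False
    obtain p0 where p0: "p = ereal p0" using p False by (cases p) auto
    have s2: "2 < p0" using p \<open>p \<noteq> 2\<close> p0 by auto
    obtain t where t: "(\<Sum>i<n. \<bar>t i\<bar> powr p0) \<le> 1"
      "(\<Sum>i<n. (a i * t i)\<^sup>2) = ((\<Sum>i<n. \<bar>a i\<bar> powr (2 * p0 / (p0 - 2))) powr (1 / (2 * p0 / (p0 - 2))))\<^sup>2"
      using weights[OF s2, of n a] by blast
    have "lp_norm p t n \<le> 1"
    proof -
      have "(\<Sum>i<n. \<bar>t i\<bar> powr p0) powr (1/p0) \<le> 1 powr (1/p0)"
        using t(1) s2 by (intro powr_mono2) (auto intro: sum_nonneg)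
      then show ?thesis using p0 by (simp add: lp_norm_fin)
    qed
    moreover have "(\<Sum>i<n. (a i * t i)\<^sup>2) = (lp_norm (exp_p p) a n)\<^sup>2"
      using t(2) s2 p0 by (simp add: exp_p_fin lp_norm_fin)
    ultimately show ?thesis by blast
  qed
qed



lemma dec_rearr_top:
  assumes k: "1 \<le> k" "k \<le> n"
  shows "\<exists>J \<subseteq> {..<n}. card J = k \<and> (\<forall>j\<in>J. dec_rearr x n k \<le> \<bar>x j\<bar>)"
proof -
  define xs where "xs = map (\<lambda>i. \<bar>x i\<bar>) [0..<n]"
  define L where "L = rev (sort xs)"
  define v where "v = L ! (k - 1)"
  have v: "dec_rearr x n k = v" by (simp add: dec_rearr_def v_def L_def xs_def)
  have lenL: "length L = n" by (simp add: L_def xs_def)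
  have sw: "sorted_wrt (\<lambda>a b. b \<le> a) L"
    unfolding L_def sorted_wrt_rev using sorted_sort[of xs] by simp
  have ge: "v \<le> L ! i" if "i < k" for i
  proof (cases "i = k - 1")
    case True then show ?thesis by (simp add: v_def)
  next
    case False
    then have "i < k - 1" using that by simp
    then show ?thesis unfolding v_def using sorted_wrt_nth_less[OF sw, of i "k-1"] lenL k by simp
  qed
  define P where "P = (\<lambda>y. v \<le> y)"
  have "filter P (take k L) = take k L"
    using ge by (auto simp: filter_id_conv P_def in_set_conv_nth)
  then have "k = length (filter P (take k L))" using lenL k by simp
  also have "\<dots> \<le> length (filter P L)"
  proof -
    have "length (filter P L) = length (filter P (take k L)) + length (filter P (drop k L))"
      using arg_cong[OF filter_append[of P "take k L" "drop k L"], of length] by simp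
    then show ?thesis by simp
  qed
  also have "\<dots> = length (filter P xs)"
  proof -
    have "mset L = mset xs" by (simp add: L_def)
    then have "mset (filter P L) = mset (filter P xs)" by (simp add: mset_filter)
    from arg_cong[OF this, of size] show ?thesis by (simp only: size_mset)
  qed
  also have "\<dots> = card {i. i < n \<and> v \<le> \<bar>x i\<bar>}"
  proof -
    have "{i. i < length xs \<and> P (xs ! i)} = {i. i < n \<and> v \<le> \<bar>x i\<bar>}"
      by (auto simp: xs_def P_def)
    then show ?thesis by (simp add: length_filter_conv_card)
  qed
  finally have "k \<le> card {i. i < n \<and> v \<le> \<bar>x i\<bar>}" .
  then obtain J where "J \<subseteq> {i. i < n \<and> v \<le> \<bar>x i\<bar>}" "card J = k"
    by (rule obtain_subset_with_card_n)
  then show ?thesis using v by (intro exI[of _ J]) auto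
qed


lemma sum_col: "(\<Sum>c\<in>A \<times> {j}. f c) = (\<Sum>i\<in>A. f (i, j))"
proof -
  have "A \<times> {j} = (\<lambda>i. (i, j)) ` A" by auto
  moreover have "inj_on (\<lambda>i. (i, j)) A" by (auto simp: inj_on_def)
  ultimately show ?thesis by (simp add: sum.reindex)
qed

lemma sum_row: "(\<Sum>c\<in>{i} \<times> A. f c) = (\<Sum>j\<in>A. f (i, j))"
proof -
  have "{i} \<times> A = (\<lambda>j. (i, j)) ` A" by auto
  moreover have "inj_on (\<lambda>j. (i, j)) A" by (auto simp: inj_on_def)
  ultimately show ?thesis by (simp add: sum.reindex)
qed

lemma case1:
  fixes p q :: ereal and A :: "nat \<times> nat \<Rightarrow> real"
  assumes pq: "1 \<le> p" "p \<le> q" "q \<le> 2" and mn: "1 \<le> m" "1 \<le> n" and k: "1 \<le> k" "k \<le> n"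
  shows "ennreal (cst * (sqrt (ln (real k + 1)) *
            dec_rearr (\<lambda>j'. lp_norm (exp_q q) (\<lambda>i. A (i, j')) m) n k))
     \<le> (\<integral>\<^sup>+ G. ennreal (op_norm p q m n (\<lambda>ij. A ij * G ij)) \<partial>gauss_matrix m n)"
proof -
  define b where "b j = lp_norm (exp_q q) (\<lambda>i. A (i, j)) m" for j
  define \<beta> where "\<beta> = dec_rearr b n k"
  have b_eq: "(\<lambda>j'. lp_norm (exp_q q) (\<lambda>i. A (i, j')) m) = b" by (simp add: b_def fun_eq_iff)
  show ?thesis
  proof (cases "\<beta> \<le> 0")
    case True
    have "cst * (sqrt (ln (real k + 1)) * \<beta>) \<le> 0"
      using True cst_pos by (intro mult_nonneg_nonpos mult_nonneg_nonpos) auto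
    then have "ennreal (cst * (sqrt (ln (real k + 1)) * \<beta>)) = 0" by (rule ennreal_neg)
    then show ?thesis unfolding b_eq \<beta>_def[symmetric] by (simp only: zero_le)
  next
    case False
    then have \<beta>: "0 < \<beta>" by simp
    obtain J where J: "J \<subseteq> {..<n}" "card J = k" "\<forall>j\<in>J. \<beta> \<le> \<bar>b j\<bar>"
      using dec_rearr_top[OF k, of b] unfolding \<beta>_def by blast
    have q1: "1 \<le> q" using pq by simp
    have "\<forall>j. \<exists>t. (\<forall>y. \<bar>\<Sum>i<m. y i * t i\<bar> \<le> lp_norm q y m) \<and>
             (\<Sum>i<m. (A (i, j) * t i)\<^sup>2) = (b j)\<^sup>2"
      unfolding b_def by (intro allI col_weights[OF q1 pq(3) mn(1)])
    then obtain T where T0: "\<forall>j. (\<forall>y. \<bar>\<Sum>i<m. y i * T j i\<bar> \<le> lp_norm q y m) \<and>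
             (\<Sum>i<m. (A (i, j) * T j i)\<^sup>2) = (b j)\<^sup>2"
      by (rule choice[THEN exE]) 
    have T: "\<And>j y. \<bar>\<Sum>i<m. y i * T j i\<bar> \<le> lp_norm q y m"
      "\<And>j. (\<Sum>i<m. (A (i, j) * T j i)\<^sup>2) = (b j)\<^sup>2"
      using T0 by auto
    define w where "w c = A c * T (snd c) (fst c)" for c
    define K where "K j = {..<m} \<times> {j}" for j :: nat
    obtain p0 where p0: "p = ereal p0" "1 \<le> p0" using pq by (cases p) auto
    have bound: "\<bar>\<Sum>c\<in>K j. w c * G c\<bar> \<le> op_norm p q m n (\<lambda>ij. A ij * G ij)" if "j \<in> J" for G j
    proof -
      have jn: "j < n" using that J by auto
      define e where "e j' = (if j' = j then 1 else (0::real))" for j'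
      have "(\<Sum>j'<n. \<bar>e j'\<bar> powr p0) = (\<Sum>j'<n. if j' = j then 1 else 0)"
        by (intro sum.cong) (auto simp: e_def)
      then have "lp_norm p e n = 1" using jn p0 by (simp add: lp_norm_fin)
      then have le: "lp_norm q (\<lambda>i. \<Sum>j'<n. A (i, j') * G (i, j') * e j') m \<le> op_norm p q m n (\<lambda>ij. A ij * G ij)"
        using op_norm_ge[OF pq(1) q1, where x=e and n=n and m=m and B="\<lambda>ij. A ij * G ij"] by simp
      have "(\<lambda>i. \<Sum>j'<n. A (i, j') * G (i, j') * e j') = (\<lambda>i. A (i, j) * G (i, j))"
      proof
        fix i
        have "(\<Sum>j'<n. A (i, j') * G (i, j') * e j') = (\<Sum>j'<n. if j' = j then A (i, j) * G (i, j) else 0)"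
          by (intro sum.cong) (auto simp: e_def)
        then show "(\<Sum>j'<n. A (i, j') * G (i, j') * e j') = A (i, j) * G (i, j)" using jn by simp
      qed
      with le have le2: "lp_norm q (\<lambda>i. A (i, j) * G (i, j)) m \<le> op_norm p q m n (\<lambda>ij. A ij * G ij)" by simp
      have "(\<Sum>c\<in>K j. w c * G c) = (\<Sum>i<m. (A (i, j) * G (i, j)) * T j i)"
        unfolding K_def sum_col by (intro sum.cong) (auto simp: w_def)
      then show ?thesis using T(1)[where j=j and y="\<lambda>i. A (i, j) * G (i, j)"] le2 by simp
    qed
    have "ennreal (cst * sqrt (ln (real k + 1)) * \<beta>)
        \<le> (\<integral>\<^sup>+ G. ennreal (op_norm p q m n (\<lambda>ij. A ij * G ij)) \<partial>GM ({..<m} \<times> {..<n}))"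
    proof (rule max_gauss_bound[where L=J and K=K and w=w])
      show "finite J" using J finite_subset by blast
      show "card J = k" "1 \<le> k" using J k by auto
      show "K j \<subseteq> {..<m} \<times> {..<n}" if "j \<in> J" for j using that J by (auto simp: K_def)
      show "finite (K j)" for j by (simp add: K_def)
      show "disjoint_family_on K J" by (auto simp: disjoint_family_on_def K_def)
      show "0 < \<beta>" by (rule \<beta>)
      show "\<beta> \<le> sqrt (\<Sum>c\<in>K j. (w c)\<^sup>2)" if "j \<in> J" for j
      proof -
        have "(\<Sum>c\<in>K j. (w c)\<^sup>2) = (b j)\<^sup>2"
          unfolding K_def sum_col T(2)[symmetric] by (intro sum.cong) (auto simp: w_def)
        then show ?thesis using J(3) that by simp
      qed
      show "\<bar>\<Sum>c\<in>K j. w c * G c\<bar> \<le> op_norm p q m n (\<lambda>ij. A ij * G ij)" if "j \<in> J" for G j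
        by (rule bound[OF that])
    qed
    then show ?thesis unfolding b_eq \<beta>_def[symmetric] gauss_matrix_def by (simp add: mult.assoc)
  qed
qed

lemma case2:
  fixes p q :: ereal and A :: "nat \<times> nat \<Rightarrow> real"
  assumes pq: "2 \<le> p" "p \<le> q" and mn: "1 \<le> m" "1 \<le> n" and k: "1 \<le> k" "k \<le> m"
  shows "ennreal (cst * (sqrt (ln (real k + 1)) *
            dec_rearr (\<lambda>i'. lp_norm (exp_p p) (\<lambda>j. A (i', j)) n) m k))
     \<le> (\<integral>\<^sup>+ G. ennreal (op_norm p q m n (\<lambda>ij. A ij * G ij)) \<partial>gauss_matrix m n)"
proof -
  define d where "d i = lp_norm (exp_p p) (\<lambda>j. A (i, j)) n" for i
  define \<beta> where "\<beta> = dec_rearr d m k"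
  have d_eq: "(\<lambda>i'. lp_norm (exp_p p) (\<lambda>j. A (i', j)) n) = d" by (simp add: d_def fun_eq_iff)
  show ?thesis
  proof (cases "\<beta> \<le> 0")
    case True
    have "cst * (sqrt (ln (real k + 1)) * \<beta>) \<le> 0"
      using True cst_pos by (intro mult_nonneg_nonpos mult_nonneg_nonpos) auto
    then have "ennreal (cst * (sqrt (ln (real k + 1)) * \<beta>)) = 0" by (rule ennreal_neg)
    then show ?thesis unfolding d_eq \<beta>_def[symmetric] by (simp only: zero_le)
  next
    case False
    then have \<beta>: "0 < \<beta>" by simp
    obtain J where J: "J \<subseteq> {..<m}" "card J = k" "\<forall>i\<in>J. \<beta> \<le> \<bar>d i\<bar>"
      using dec_rearr_top[OF k, of d] unfolding \<beta>_def by blast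
    have p1: "1 \<le> p" "1 \<le> q" using pq by (auto intro: order_trans[of 1 2])
    have "\<forall>i. \<exists>x. lp_norm p x n \<le> 1 \<and> (\<Sum>j<n. (A (i, j) * x j)\<^sup>2) = (d i)\<^sup>2"
      unfolding d_def by (intro allI row_weights[OF pq(1) mn(2)])
    then obtain X where X0: "\<forall>i. lp_norm p (X i) n \<le> 1 \<and> (\<Sum>j<n. (A (i, j) * X i j)\<^sup>2) = (d i)\<^sup>2"
      by (rule choice[THEN exE])
    have X: "\<And>i. lp_norm p (X i) n \<le> 1"
      "\<And>i. (\<Sum>j<n. (A (i, j) * X i j)\<^sup>2) = (d i)\<^sup>2"
      using X0 by auto
    define w where "w c = A c * X (fst c) (snd c)" for c
    define K where "K i = {i} \<times> {..<n}" for i :: nat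
    have bound: "\<bar>\<Sum>c\<in>K i. w c * G c\<bar> \<le> op_norm p q m n (\<lambda>ij. A ij * G ij)" if "i \<in> J" for G i
    proof -
      have im: "i < m" using that J by auto
      have "(\<Sum>c\<in>K i. w c * G c) = (\<lambda>i'. \<Sum>j<n. A (i', j) * G (i', j) * X i j) i"
        unfolding K_def sum_row by (intro sum.cong) (auto simp: w_def)
      also have "\<bar>\<dots>\<bar> \<le> lp_norm q (\<lambda>i'. \<Sum>j<n. A (i', j) * G (i', j) * X i j) m"
        by (rule lp_comp[OF p1(2) im])
      also have "\<dots> \<le> op_norm p q m n (\<lambda>ij. A ij * G ij)"
        using op_norm_ge[OF p1 X(1)[of i], where m=m and B="\<lambda>ij. A ij * G ij"] by simp
      finally show ?thesis .
    qed
    have "ennreal (cst * sqrt (ln (real k + 1)) * \<beta>)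
        \<le> (\<integral>\<^sup>+ G. ennreal (op_norm p q m n (\<lambda>ij. A ij * G ij)) \<partial>GM ({..<m} \<times> {..<n}))"
    proof (rule max_gauss_bound[where L=J and K=K and w=w])
      show "finite J" using J finite_subset by blast
      show "card J = k" "1 \<le> k" using J k by auto
      show "K i \<subseteq> {..<m} \<times> {..<n}" if "i \<in> J" for i using that J by (auto simp: K_def)
      show "finite (K i)" for i by (simp add: K_def)
      show "disjoint_family_on K J" by (auto simp: disjoint_family_on_def K_def)
      show "0 < \<beta>" by (rule \<beta>)
      show "\<beta> \<le> sqrt (\<Sum>c\<in>K i. (w c)\<^sup>2)" if "i \<in> J" for i
      proof -
        have "(\<Sum>c\<in>K i. (w c)\<^sup>2) = (d i)\<^sup>2"
          unfolding K_def sum_row X(2)[symmetric] by (intro sum.cong) (auto simp: w_def)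
        then show ?thesis using J(3) that by simp
      qed
      show "\<bar>\<Sum>c\<in>K i. w c * G c\<bar> \<le> op_norm p q m n (\<lambda>ij. A ij * G ij)" if "i \<in> J" for G i
        by (rule bound[OF that])
    qed
    then show ?thesis unfolding d_eq \<beta>_def[symmetric] gauss_matrix_def by (simp add: mult.assoc)
  qed
qed

lemma Max_attained_le:
  fixes n :: nat
  assumes "1 \<le> n" "\<And>k. 1 \<le> k \<Longrightarrow> k \<le> n \<Longrightarrow> ennreal (c * f k) \<le> R"
  shows "ennreal (c * Max (f ` {1..n})) \<le> R"
proof -
  have "Max (f ` {1..n}) \<in> f ` {1..n}" using assms(1) by (intro Max_in) auto
  then obtain k where "k \<in> {1..n}" "Max (f ` {1..n}) = f k" by auto
  then show ?thesis using assms(2)[of k] by simp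
qed

theorem proposition5p3:
  fixes p q :: ereal
  assumes "1 \<le> p" and "1 \<le> q"
  shows "\<exists>c>0. \<forall>(m::nat) (n::nat) (A :: nat \<times> nat \<Rightarrow> real). 1 \<le> m \<longrightarrow> 1 \<le> n \<longrightarrow>
     (p \<le> q \<and> q \<le> 2 \<longrightarrow>
        (\<integral>\<^sup>+ G. ennreal (op_norm p q m n (\<lambda>ij. A ij * G ij)) \<partial>gauss_matrix m n)
          \<ge> ennreal (c * Max ((\<lambda>j. sqrt (ln (real j + 1)) *
                 dec_rearr (\<lambda>j'. lp_norm (exp_q q) (\<lambda>i. A (i, j')) m) n j) ` {1..n}))) \<and>
     (2 \<le> p \<and> p \<le> q \<longrightarrow>
        (\<integral>\<^sup>+ G. ennreal (op_norm p q m n (\<lambda>ij. A ij * G ij)) \<partial>gauss_matrix m n)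
          \<ge> ennreal (c * Max ((\<lambda>i. sqrt (ln (real i + 1)) *
                 dec_rearr (\<lambda>i'. lp_norm (exp_p p) (\<lambda>j. A (i', j)) n) m i) ` {1..m})))"
proof (intro exI[of _ cst] conjI cst_pos allI impI)
  fix m n :: nat and A :: "nat \<times> nat \<Rightarrow> real"
  assume mn: "1 \<le> m" "1 \<le> n"
  {
    assume pq: "p \<le> q \<and> q \<le> 2"
    show "(\<integral>\<^sup>+ G. ennreal (op_norm p q m n (\<lambda>ij. A ij * G ij)) \<partial>gauss_matrix m n)
          \<ge> ennreal (cst * Max ((\<lambda>j. sqrt (ln (real j + 1)) *
                 dec_rearr (\<lambda>j'. lp_norm (exp_q q) (\<lambda>i. A (i, j')) m) n j) ` {1..n}))"
    proof (rule Max_attained_le[OF mn(2)])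
      fix k :: nat assume k: "1 \<le> k" "k \<le> n"
      show "ennreal (cst * (sqrt (ln (real k + 1)) *
                 dec_rearr (\<lambda>j'. lp_norm (exp_q q) (\<lambda>i. A (i, j')) m) n k))
          \<le> (\<integral>\<^sup>+ G. ennreal (op_norm p q m n (\<lambda>ij. A ij * G ij)) \<partial>gauss_matrix m n)"
        using pq by (intro case1[OF assms(1) _ _ mn k]) auto
    qed
  next
    assume pq: "2 \<le> p \<and> p \<le> q"
    show "(\<integral>\<^sup>+ G. ennreal (op_norm p q m n (\<lambda>ij. A ij * G ij)) \<partial>gauss_matrix m n)
          \<ge> ennreal (cst * Max ((\<lambda>i. sqrt (ln (real i + 1)) *
                 dec_rearr (\<lambda>i'. lp_norm (exp_p p) (\<lambda>j. A (i', j)) n) m i) ` {1..m}))"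
    proof (rule Max_attained_le[OF mn(1)])
      fix k :: nat assume k: "1 \<le> k" "k \<le> m"
      show "ennreal (cst * (sqrt (ln (real k + 1)) *
                 dec_rearr (\<lambda>i'. lp_norm (exp_p p) (\<lambda>j. A (i', j)) n) m k))
          \<le> (\<integral>\<^sup>+ G. ennreal (op_norm p q m n (\<lambda>ij. A ij * G ij)) \<partial>gauss_matrix m n)"
        using pq by (intro case2[OF _ _ mn k]) auto
    qed
  }
qed

end
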